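(* Let $f:\mathbb{R}^n\to\mathbb{R}$ be $r+1$ times continuously differentiable for some integer $r\ge1$, with $\nabla f$ Lipschitz continuous with constant $L$. Let $x^*$ satisfy $\nabla f(x^* )=0$, and write $\nabla^2 f(x^* )=\sum_{i=1}^n\lambda_i v_iv_i^T$ with $\{v_1,\dots,v_n\}$ orthonormal and \[ \lambda_1\ge\dots\ge\lambda_{n-p}\ge 0>\lambda_{n-p+1}\ge\dots\ge\lambda_n \] for some $1\le p<n$; suppose $\lambda_1>0$. Let $0<\alpha<4/\lambda_1$ and $\beta\in(\max(-1+\alpha\lambda_1/2,0),1)$, and let \[ DG(x^*,x^* )=\begin{bmatrix}(1+\beta)I-\alpha\nabla^2 f(x^* ) & -\beta I\\ I & 0\end{bmatrix}. \] For $i=n-p+1,\dots,n$ define \[ \mu_i^{\mathrm{hi}}=\tfrac12\Big[(1+\beta-\alpha\lambda_i)+\sqrt{(1+\beta-\alpha\lambda_i)^2-4\beta}\Big], \] which is a real eigenvalue of $DG(x^*,x^* )$ with $\mu_i^{\mathrm{hi}}>1$. Then for each $i=n-p+1,\dots,n$, the vector $\begin{bmatrix} v_i\\ (1/\mu_i^{\mathrm{hi}})v_i\end{bmatrix}\in\mathbb{R}^{2n}$ is an eigenvector of $DG(x^*,x^* )$ corresponding to the eigenvalue $\mu_i^{\mathrm{hi}}$, and the set of these $p$ vectors forms an orthogonal basis for the invariant subspace of $\mathbb{R}^{2n}$ corresponding to the eigenvalues of $DG(x^*,x^* )$ whose magnitude is greater than $1$.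
   Context: $DG(x^*,x^* )$ is the Jacobian at $(x^*,x^* )$ of the heavy-ball map $G(z_1,z_2)=(z_1-\alpha\nabla f(z_1)+\beta(z_1-z_2),\,z_1)$. The invariant subspace corresponding to eigenvalues of magnitude greater than $1$ is the sum of the (generalized) eigenspaces of $DG(x^*,x^* )$ for eigenvalues of modulus greater than $1$. *)

theory Defs
  imports "HOL-Analysis.Analysis"
begin

definition pdiff :: "'n::finite \<Rightarrow> (real^'n \<Rightarrow> real) \<Rightarrow> real^'n \<Rightarrow> real" where
  "pdiff i g x = deriv (\<lambda>t. g (x + t *\<^sub>R axis i 1)) 0"

definition ipdiff :: "'n::finite list \<Rightarrow> (real^'n \<Rightarrow> real) \<Rightarrow> real^'n \<Rightarrow> real" where
  "ipdiff is g = foldr pdiff is g"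

definition cont_diff :: "nat \<Rightarrow> (real^'n::finite \<Rightarrow> real) \<Rightarrow> bool" where
  "cont_diff k g \<longleftrightarrow>
     (\<forall>is. length is < k \<longrightarrow> (\<forall>i x. (\<lambda>t. ipdiff is g (x + t *\<^sub>R axis i 1)) differentiable (at 0))) \<and>
     (\<forall>is. length is \<le> k \<longrightarrow> continuous_on UNIV (ipdiff is g))"

definition gradient :: "(real^'n::finite \<Rightarrow> real) \<Rightarrow> real^'n \<Rightarrow> real^'n" where
  "gradient g x = (\<chi> i. pdiff i g x)"

definition hessian :: "(real^'n::finite \<Rightarrow> real) \<Rightarrow> real^'n \<Rightarrow> real^'n^'n" where
  "hessian g x = (\<chi> i j. pdiff i (pdiff j g) x)"

definition outer :: "real^'n::finite \<Rightarrow> real^'n \<Rightarrow> real^'n^'n" where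
  "outer a b = (\<chi> i j. a $ i * b $ j)"

definition blockvec :: "real^'n::finite \<Rightarrow> real^'n \<Rightarrow> real^('n + 'n)" where
  "blockvec x y = (\<chi> k. case k of Inl j \<Rightarrow> x $ j | Inr j \<Rightarrow> y $ j)"

definition hb_jacobian :: "real \<Rightarrow> real \<Rightarrow> real^'n::finite^'n \<Rightarrow> real^('n + 'n)^('n + 'n)" where
  "hb_jacobian \<alpha> \<beta> H = (\<chi> a b. case (a, b) of
      (Inl i, Inl j) \<Rightarrow> (1 + \<beta>) * (mat 1 :: real^'n^'n) $ i $ j - \<alpha> * H $ i $ j
    | (Inl i, Inr j) \<Rightarrow> - \<beta> * (mat 1 :: real^'n^'n) $ i $ j
    | (Inr i, Inl j) \<Rightarrow> (mat 1 :: real^'n^'n) $ i $ j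
    | (Inr i, Inr j) \<Rightarrow> 0)"

definition cmat :: "real^'m::finite^'m \<Rightarrow> complex^'m^'m" where
  "cmat A = (\<chi> i j. complex_of_real (A $ i $ j))"

definition cvec :: "real^'m::finite \<Rightarrow> complex^'m" where
  "cvec z = (\<chi> i. complex_of_real (z $ i))"

definition gen_eigenspace :: "complex^'m::finite^'m \<Rightarrow> complex \<Rightarrow> (complex^'m) set" where
  "gen_eigenspace A \<mu> = {w. \<exists>k. ((\<lambda>u. A *v u - \<mu> *s u) ^^ k) w = 0}"

definition unstable_subspace :: "real^'m::finite^'m \<Rightarrow> (real^'m) set" where
  "unstable_subspace A = {z. \<exists>F w. finite F \<and>
      (\<forall>\<mu>\<in>F. cmod \<mu> > 1 \<and> w \<mu> \<in> gen_eigenspace (cmat A) \<mu>) \<and>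
      cvec z = (\<Sum>\<mu>\<in>F. w \<mu>)}"

end

theory Submission imports Defs begin

lemma sum_UNIV_Plus:
  "(\<Sum>k\<in>(UNIV::('a::finite+'b::finite) set). g k) = (\<Sum>i\<in>UNIV. g (Inl i)) + (\<Sum>j\<in>UNIV. g (Inr j))"
proof -
  have "(\<Sum>k\<in>(UNIV::('a+'b) set). g k) = (\<Sum>k\<in>(UNIV::'a set) <+> (UNIV::'b set). g k)"
    by (simp only: UNIV_Plus_UNIV)
  also have "\<dots> = (\<Sum>i\<in>UNIV. g (Inl i)) + (\<Sum>j\<in>UNIV. g (Inr j))"
    by (subst sum.Plus) (auto simp: comp_def)
  finally show ?thesis .
qed

lemma blockvec_Inl [simp]: "blockvec x y $ Inl j = x $ j"
  and blockvec_Inr [simp]: "blockvec x y $ Inr j = y $ j"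
  by (simp_all add: blockvec_def)

lemma inner_blockvec: "blockvec x y \<bullet> blockvec x' y' = x \<bullet> x' + y \<bullet> y'"
  by (simp add: inner_vec_def sum_UNIV_Plus)

lemma blockvec_eq_0: "blockvec x y = 0 \<longleftrightarrow> x = 0 \<and> y = 0"
proof
  assume h: "blockvec x y = 0"
  have "x $ j = 0" "y $ j = 0" for j
    using arg_cong[OF h, of "\<lambda>z. z $ Inl j"] arg_cong[OF h, of "\<lambda>z. z $ Inr j"] by auto
  then show "x = 0 \<and> y = 0" by (simp add: vec_eq_iff)
qed (auto simp: vec_eq_iff blockvec_def split: sum.split)

lemma blockvec_add: "blockvec x y + blockvec x' y' = blockvec (x + x') (y + y')"
  by (auto simp: vec_eq_iff blockvec_def split: sum.split)

lemma blockvec_scale: "c *\<^sub>R blockvec x y = blockvec (c *\<^sub>R x) (c *\<^sub>R y)"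
  by (auto simp: vec_eq_iff blockvec_def split: sum.split)

lemma blockvec_sum: "finite S \<Longrightarrow> (\<Sum>k\<in>S. blockvec (x k) (y k)) = blockvec (\<Sum>k\<in>S. x k) (\<Sum>k\<in>S. y k)"
  by (induction S rule: finite_induct) (auto simp: blockvec_add, auto simp: vec_eq_iff blockvec_def split: sum.split)

lemma blockvec_parts: "z = blockvec (\<chi> j. z $ Inl j) (\<chi> j. z $ Inr j)"
  by (auto simp: vec_eq_iff blockvec_def split: sum.split)

lemma if0_mult: "(if P then a else 0) * b = (if P then a * b else (0::'a::semiring_0))"
  by simp

lemma mult_if0: "b * (if P then a else 0) = (if P then b * a else (0::'a::semiring_0))"
  by simp

lemma cor_if0: "complex_of_real (if P then a else 0) = (if P then complex_of_real a else 0)"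
  by simp

lemma hb_entries:
  "hb_jacobian \<alpha> \<beta> H $ Inl i $ Inl j = (if i = j then 1 + \<beta> else 0) - \<alpha> * H $ i $ j"
  "hb_jacobian \<alpha> \<beta> H $ Inl i $ Inr j = (if i = j then - \<beta> else 0)"
  "hb_jacobian \<alpha> \<beta> H $ Inr i $ Inl j = (if i = j then 1 else 0)"
  "hb_jacobian \<alpha> \<beta> H $ Inr i $ Inr j = 0"
  by (simp_all add: hb_jacobian_def mat_def)

lemma hb_mult: "hb_jacobian \<alpha> \<beta> H *v blockvec x y = blockvec ((1+\<beta>) *\<^sub>R x - \<alpha> *\<^sub>R (H *v x) - \<beta> *\<^sub>R y) x"
proof -
  have "(hb_jacobian \<alpha> \<beta> H *v blockvec x y) $ k = blockvec ((1+\<beta>) *\<^sub>R x - \<alpha> *\<^sub>R (H *v x) - \<beta> *\<^sub>R y) x $ k" for k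
  proof (cases k)
    case (Inl i)
    then show ?thesis
      by (simp add: matrix_vector_mult_def hb_entries sum_UNIV_Plus algebra_simps
          sum_subtractf sum_distrib_left if0_mult mult_if0 cor_if0)
  next
    case (Inr i)
    then show ?thesis
      by (simp add: matrix_vector_mult_def hb_entries sum_UNIV_Plus if0_mult mult_if0 cor_if0)
  qed
  then show ?thesis by (simp add: vec_eq_iff)
qed

lemma hb_cmult_Inl: "(cmat (hb_jacobian \<alpha> \<beta> H) *v w) $ Inl i =
   (1+\<beta>) * w $ Inl i - \<alpha> * (\<Sum>j\<in>UNIV. complex_of_real (H$i$j) * w $ Inl j) - \<beta> * w $ Inr i"
  by (simp add: cmat_def matrix_vector_mult_def hb_entries sum_UNIV_Plus algebra_simps
          sum_subtractf sum_distrib_left if0_mult mult_if0 cor_if0)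

lemma hb_cmult_Inr: "(cmat (hb_jacobian \<alpha> \<beta> H) *v w) $ Inr i = w $ Inl i"
  by (simp add: cmat_def matrix_vector_mult_def hb_entries sum_UNIV_Plus if0_mult mult_if0 cor_if0)


definition ca :: "real^'n::finite \<Rightarrow> complex^('n+'n) \<Rightarrow> complex" where
  "ca u w = (\<Sum>j\<in>UNIV. w $ Inl j * complex_of_real (u $ j))"

definition cb :: "real^'n::finite \<Rightarrow> complex^('n+'n) \<Rightarrow> complex" where
  "cb u w = (\<Sum>j\<in>UNIV. w $ Inr j * complex_of_real (u $ j))"

lemma cb_A: "cb u (cmat (hb_jacobian \<alpha> \<beta> H) *v w) = ca u w"
  by (simp add: ca_def cb_def hb_cmult_Inr)

lemma ca_add: "ca u (w + w') = ca u w + ca u w'" and cb_add: "cb u (w + w') = cb u w + cb u w'"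
  by (simp_all add: ca_def cb_def algebra_simps sum.distrib)

lemma ca_sum: "finite F \<Longrightarrow> ca u (\<Sum>x\<in>F. w x) = (\<Sum>x\<in>F. ca u (w x))"
  and cb_sum: "finite F \<Longrightarrow> cb u (\<Sum>x\<in>F. w x) = (\<Sum>x\<in>F. cb u (w x))"
  by (induction F rule: finite_induct) (auto simp: ca_add cb_add, simp_all add: ca_def cb_def)

lemma ca_smult: "ca u (c *s w) = c * ca u w" and cb_smult: "cb u (c *s w) = c * cb u w"
  and ca_diff: "ca u (w - w') = ca u w - ca u w'" and cb_diff: "cb u (w - w') = cb u w - cb u w'"
  by (simp_all add: ca_def cb_def algebra_simps sum_distrib_left sum_subtractf)

lemma ca_cvec: "ca u (cvec z) = complex_of_real ((\<chi> j. z $ Inl j) \<bullet> u)"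
  and cb_cvec: "cb u (cvec z) = complex_of_real ((\<chi> j. z $ Inr j) \<bullet> u)"
  by (simp_all add: ca_def cb_def cvec_def inner_vec_def)

lemma root_facts:
  fixes s \<beta> :: real
  assumes "s > 1 + \<beta>" "0 < \<beta>" "\<beta> < 1"
  defines "m \<equiv> (s + sqrt (s^2 - 4 * \<beta>)) / 2"
  shows "m > 1" "m^2 - s * m + \<beta> = 0" "0 < s - m" "s - m < 1"
proof -
  define r where "r = sqrt (s^2 - 4 * \<beta>)"
  have sq: "s^2 > (1 + \<beta>)^2" using assms(1,2) by (intro power_strict_mono) auto
  have "(1 + \<beta>)^2 - 4 * \<beta> = (1 - \<beta>)^2" by (simp add: power2_eq_square algebra_simps)
  moreover have "(1 - \<beta>)^2 \<ge> 0" by simp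
  ultimately have d: "s^2 - 4 * \<beta> > 0" using sq by linarith
  have r2: "r^2 = s^2 - 4 * \<beta>" using d by (simp add: r_def)
  have r0: "r > 0" using d by (simp add: r_def)
  have m: "m = (s + r) / 2" by (simp add: m_def r_def)
  show root: "m^2 - s * m + \<beta> = 0" unfolding m using r2 by (simp add: power2_eq_square field_simps)
  show "m > 1"
  proof (cases "s \<ge> 2")
    case True then show ?thesis using r0 m by simp
  next
    case False
    have "(2 - s)^2 < r^2" using r2 assms(1) by (simp add: power2_eq_square algebra_simps)
    then have "2 - s < r" using r0 False using power2_less_imp_less by fastforce
    then show ?thesis using m by simp
  qed
  have "r^2 < s^2" using r2 assms(2) by simp
  moreover have "s \<ge> 0" using assms(1,2) by simp
  ultimately have "r < s" using power2_less_imp_less by blast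
  then show "0 < s - m" using m by simp
  have "m * (s - m) = \<beta>" using root by (simp add: power2_eq_square algebra_simps)
  moreover have "m > 1" using \<open>1 < m\<close> .
  ultimately show "s - m < 1" using assms(3) \<open>0 < s - m\<close> by (metis not_less_iff_gr_or_eq less_1_mult mult_cancel_left1)
qed

lemma no_big_root:
  fixes s \<beta> :: real and \<mu> :: complex
  assumes "\<bar>s\<bar> \<le> 1 + \<beta>" "0 < \<beta>" "\<beta> < 1" "cmod \<mu> > 1"
  shows "\<mu>^2 - complex_of_real s * \<mu> + complex_of_real \<beta> \<noteq> 0"
proof
  assume h: "\<mu>^2 - complex_of_real s * \<mu> + complex_of_real \<beta> = 0"
  obtain x y where xy: "\<mu> = Complex x y" by (cases \<mu>)
  have re: "x^2 - y^2 - s * x + \<beta> = 0" and im: "2 * x * y - s * y = 0"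
    using arg_cong[OF h, of Re] arg_cong[OF h, of Im] xy by (simp_all add: power2_eq_square)
  have c: "x^2 + y^2 > 1" using assms(4) xy by (metis cmod_power2 complex.sel(1,2) power2_gt_1_iff)
  show False
  proof (cases "y = 0")
    case False
    then have "2 * x = s" using im by (simp add: algebra_simps)
    then have sx: "s = 2 * x" by simp
    have "x^2 + y^2 = \<beta>" using re unfolding sx by (simp add: power2_eq_square algebra_simps)
    then show False using c assms(3) by simp
  next
    case True
    then have x2: "x^2 > 1" and e: "x^2 + \<beta> = s * x" using c re by simp_all
    have ax: "\<bar>x\<bar> > 1" using x2 by (auto simp: power2_gt_1_iff)
    have "x^2 + \<beta> \<le> (1 + \<beta>) * \<bar>x\<bar>"
    proof -
      have "s * x \<le> \<bar>s\<bar> * \<bar>x\<bar>" by (metis abs_ge_self abs_mult)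
      also have "\<dots> \<le> (1 + \<beta>) * \<bar>x\<bar>" using assms(1) by (simp add: mult_right_mono)
      finally show ?thesis using e by simp
    qed
    then have "(\<bar>x\<bar> - 1) * (\<bar>x\<bar> - \<beta>) \<le> 0" by (simp add: power2_eq_square algebra_simps)
    moreover have "(\<bar>x\<bar> - 1) * (\<bar>x\<bar> - \<beta>) > 0" using ax assms(3) by simp
    ultimately show False by simp
  qed
qed

lemma cmat_cvec: "cmat A *v cvec z = cvec (A *v z)"
  by (simp add: vec_eq_iff cmat_def cvec_def matrix_vector_mult_def)

lemma cvec_sum_scale: "cvec (\<Sum>i\<in>S. c i *\<^sub>R x i) = (\<Sum>i\<in>S. complex_of_real (c i) *s cvec (x i))"
  by (simp add: vec_eq_iff cvec_def sum_component)

lemma cvec_scale: "cvec (c *\<^sub>R z) = complex_of_real c *s cvec z"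
  by (simp add: vec_eq_iff cvec_def)

lemma T_sum:
  fixes M :: "complex^'m::finite^'m"
  assumes "finite S"
  shows "M *v (\<Sum>i\<in>S. d i *s x i) - \<mu> *s (\<Sum>i\<in>S. d i *s x i) = (\<Sum>i\<in>S. d i *s (M *v x i - \<mu> *s x i))"
  using assms
proof (induction S rule: finite_induct)
  case empty then show ?case by (simp add: vec_eq_iff)
next
  case (insert a F)
  then show ?case
    by (simp add: matrix_vector_right_distrib vector_scalar_commute vec_eq_iff algebra_simps)
qed

context
  fixes H :: "real^'n::finite^'n" and lam :: "nat \<Rightarrow> real" and v :: "nat \<Rightarrow> real^'n" and K :: "nat set"
  assumes finK: "finite K"
    and orth: "\<forall>i\<in>K. \<forall>j\<in>K. v i \<bullet> v j = (if i = j then 1 else 0)"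
    and hK: "H = (\<Sum>i\<in>K. lam i *\<^sub>R outer (v i) (v i))"
begin

lemma H_entry: "H $ i $ j = (\<Sum>l\<in>K. lam l * v l $ i * v l $ j)"
  by (simp add: hK sum_component outer_def mult.assoc)

lemma H_col: assumes "k \<in> K" shows "(\<Sum>i\<in>UNIV. H $ i $ j * v k $ i) = lam k * v k $ j"
proof -
  have "(\<Sum>i\<in>UNIV. H $ i $ j * v k $ i) = (\<Sum>l\<in>K. lam l * v l $ j * (\<Sum>i\<in>UNIV. v l $ i * v k $ i))"
    by (simp add: H_entry sum_distrib_left sum_distrib_right sum.swap[of _ UNIV] mult_ac)
  also have "\<dots> = (\<Sum>l\<in>K. lam l * v l $ j * (if l = k then 1 else 0))"
    using orth assms by (intro sum.cong) (auto simp: inner_vec_def)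
  also have "\<dots> = lam k * v k $ j" using assms finK by (simp add: mult_if0)
  finally show ?thesis .
qed

lemma H_eig: assumes "k \<in> K" shows "H *v v k = lam k *\<^sub>R v k"
proof -
  have "H $ i $ j = H $ j $ i" for i j by (simp add: H_entry mult_ac)
  then show ?thesis using H_col[OF assms]
    by (simp add: vec_eq_iff matrix_vector_mult_def)
qed

lemma v_inj: "inj_on v K"
proof
  fix i j assume "i \<in> K" "j \<in> K" "v i = v j"
  then show "i = j" using orth by (metis one_neq_zero)
qed

lemma complete:
  assumes cK: "card K = CARD('n)"
  shows "x = (\<Sum>k\<in>K. (x \<bullet> v k) *\<^sub>R v k)"
proof -
  let ?V = "v ` K"
  have cV: "card ?V = CARD('n)" using card_image[OF v_inj] cK by simp
  have "pairwise orthogonal ?V"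
    using orth v_inj by (auto simp: pairwise_def orthogonal_def)
  moreover have "0 \<notin> ?V" using orth by (metis imageE inner_zero_left zero_neq_one)
  ultimately have ind: "independent ?V" by (rule pairwise_orthogonal_independent)
  have "UNIV \<subseteq> span ?V"
    by (rule card_ge_dim_independent) (use ind cV in auto)
  define y where "y = x - (\<Sum>k\<in>K. (x \<bullet> v k) *\<^sub>R v k)"
  have yv: "y \<bullet> v l = 0" if "l \<in> K" for l
  proof -
    have "(\<Sum>k\<in>K. (x \<bullet> v k) *\<^sub>R v k) \<bullet> v l = (\<Sum>k\<in>K. (x \<bullet> v k) * (v k \<bullet> v l))"
      by (simp add: inner_sum_left)
    also have "\<dots> = (\<Sum>k\<in>K. if k = l then x \<bullet> v k else 0)"
      using orth that by (intro sum.cong) auto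
    also have "\<dots> = x \<bullet> v l" using finK that by simp
    finally show ?thesis by (simp add: y_def inner_diff_left)
  qed
  have "orthogonal y y"
    by (rule orthogonal_to_span[of y ?V]) (use \<open>UNIV \<subseteq> span ?V\<close> yv in \<open>auto simp: orthogonal_def\<close>)
  then have "y = 0" by (simp add: orthogonal_def)
  then show ?thesis by (simp add: y_def)
qed

lemma ca_A: assumes "k \<in> K"
  shows "ca (v k) (cmat (hb_jacobian \<alpha> \<beta> H) *v w)
     = complex_of_real (1 + \<beta> - \<alpha> * lam k) * ca (v k) w - complex_of_real \<beta> * cb (v k) w"
proof -
  have mid: "(\<Sum>j\<in>UNIV. (\<Sum>l\<in>UNIV. complex_of_real (H$j$l) * w $ Inl l) * complex_of_real (v k $ j))
      = complex_of_real (lam k) * ca (v k) w"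
  proof -
    have "(\<Sum>j\<in>UNIV. (\<Sum>l\<in>UNIV. complex_of_real (H$j$l) * w $ Inl l) * complex_of_real (v k $ j))
        = (\<Sum>l\<in>UNIV. w $ Inl l * complex_of_real (\<Sum>j\<in>UNIV. H$j$l * v k $ j))"
      unfolding sum_distrib_right by (subst sum.swap) (simp add: sum_distrib_left mult_ac)
    also have "\<dots> = (\<Sum>l\<in>UNIV. w $ Inl l * complex_of_real (lam k * v k $ l))"
      using H_col[OF assms] by simp
    finally show ?thesis by (simp add: ca_def sum_distrib_left mult_ac)
  qed
  show ?thesis
  proof -
    have "ca (v k) (cmat (hb_jacobian \<alpha> \<beta> H) *v w) = (\<Sum>j\<in>UNIV.
       (1 + complex_of_real \<beta>) * (w $ Inl j * complex_of_real (v k $ j))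
       - complex_of_real \<alpha> * ((\<Sum>l\<in>UNIV. complex_of_real (H$j$l) * w $ Inl l) * complex_of_real (v k $ j))
       - complex_of_real \<beta> * (w $ Inr j * complex_of_real (v k $ j)))"
      unfolding ca_def hb_cmult_Inl by (intro sum.cong refl) (simp only: left_diff_distrib mult.assoc)
    also have "\<dots> = (1 + complex_of_real \<beta>) * ca (v k) w - complex_of_real \<alpha> *
       (\<Sum>j\<in>UNIV. (\<Sum>l\<in>UNIV. complex_of_real (H$j$l) * w $ Inl l) * complex_of_real (v k $ j))
       - complex_of_real \<beta> * cb (v k) w"
      by (simp only: sum_subtractf sum_distrib_left ca_def cb_def)
    also have "\<dots> = (1 + complex_of_real \<beta>) * ca (v k) w - complex_of_real \<alpha> * (complex_of_real (lam k) * ca (v k) w)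
       - complex_of_real \<beta> * cb (v k) w"
      by (simp only: mid)
    finally show ?thesis by (simp add: algebra_simps)
  qed
qed

lemma ca_T: assumes "k \<in> K"
  shows "ca (v k) (cmat (hb_jacobian \<alpha> \<beta> H) *v w - \<mu> *s w)
     = (complex_of_real (1 + \<beta> - \<alpha> * lam k) - \<mu>) * ca (v k) w - complex_of_real \<beta> * cb (v k) w"
  and cb_T: "cb (v k) (cmat (hb_jacobian \<alpha> \<beta> H) *v w - \<mu> *s w) = ca (v k) w - \<mu> * cb (v k) w"
  using ca_A[OF assms] by (simp_all add: ca_diff cb_diff ca_smult cb_smult cb_A algebra_simps)

lemma ca_zero [simp]: "ca u 0 = 0" and cb_zero [simp]: "cb u 0 = 0"
  by (simp_all add: ca_def cb_def)

lemma stable_block: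
  assumes "k \<in> K"
    and nr: "\<mu>^2 - complex_of_real (1 + \<beta> - \<alpha> * lam k) * \<mu> + complex_of_real \<beta> \<noteq> 0"
  shows "((\<lambda>u. cmat (hb_jacobian \<alpha> \<beta> H) *v u - \<mu> *s u) ^^ m) w = 0
          \<Longrightarrow> ca (v k) w = 0 \<and> cb (v k) w = 0"
proof (induction m arbitrary: w)
  case 0
  then show ?case by simp
next
  case (Suc m)
  let ?T = "\<lambda>u. cmat (hb_jacobian \<alpha> \<beta> H) *v u - \<mu> *s u"
  have "(?T ^^ m) (?T w) = 0" using Suc.prems by (simp add: funpow_Suc_right del: funpow.simps)
  then have h: "ca (v k) (?T w) = 0" "cb (v k) (?T w) = 0" using Suc.IH by blast+
  define a where "a = ca (v k) w"
  define b where "b = cb (v k) w"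
  define s where "s = complex_of_real (1 + \<beta> - \<alpha> * lam k)"
  have e1: "(s - \<mu>) * a - complex_of_real \<beta> * b = 0" and e2: "a - \<mu> * b = 0"
    using h ca_T[OF assms(1)] cb_T by (simp_all add: a_def b_def s_def)
  have "(\<mu>^2 - s * \<mu> + complex_of_real \<beta>) * b = 0"
    using e1 e2 by (simp add: power2_eq_square algebra_simps)
  then have "b = 0" using nr by (simp add: s_def)
  then show ?case using e2 by (simp add: a_def b_def)
qed

lemma unstable_block:
  assumes "k \<in> K"
    and rt: "m\<^sub>k^2 - complex_of_real (1 + \<beta> - \<alpha> * lam k) * m\<^sub>k + complex_of_real \<beta> = 0"
    and ne: "complex_of_real (1 + \<beta> - \<alpha> * lam k) - m\<^sub>k \<noteq> \<mu>"
  shows "((\<lambda>u. cmat (hb_jacobian \<alpha> \<beta> H) *v u - \<mu> *s u) ^^ m) w = 0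
          \<Longrightarrow> ca (v k) w = m\<^sub>k * cb (v k) w"
proof (induction m arbitrary: w)
  case 0
  then show ?case by simp
next
  case (Suc m)
  let ?T = "\<lambda>u. cmat (hb_jacobian \<alpha> \<beta> H) *v u - \<mu> *s u"
  have "(?T ^^ m) (?T w) = 0" using Suc.prems by (simp add: funpow_Suc_right del: funpow.simps)
  then have h: "ca (v k) (?T w) = m\<^sub>k * cb (v k) (?T w)" using Suc.IH by blast
  define a where "a = ca (v k) w"
  define b where "b = cb (v k) w"
  define s where "s = complex_of_real (1 + \<beta> - \<alpha> * lam k)"
  have e1: "(s - \<mu>) * a - complex_of_real \<beta> * b = m\<^sub>k * (a - \<mu> * b)"
    using h ca_T[OF assms(1)] cb_T by (simp_all add: a_def b_def s_def)
  have bt: "complex_of_real \<beta> = m\<^sub>k * (s - m\<^sub>k)" using rt by (simp add: s_def power2_eq_square algebra_simps)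
  have "(s - m\<^sub>k - \<mu>) * (a - m\<^sub>k * b) = 0"
    using e1 unfolding bt by (simp add: algebra_simps)
  then show ?case using ne by (simp add: a_def b_def s_def)
qed

end

theorem corollary2p5:
  fixes f :: "real^'n::finite \<Rightarrow> real"
    and r :: nat and L \<alpha> \<beta> :: real and p :: nat
    and xs :: "real^'n"
    and lam :: "nat \<Rightarrow> real" and v :: "nat \<Rightarrow> real^'n"
    and mu_hi :: "nat \<Rightarrow> real"
  assumes "r \<ge> 1"
    and "cont_diff (r + 1) f"
    and "L-lipschitz_on UNIV (gradient f)"
    and "gradient f xs = 0"
    and orthonormal: "\<forall>i\<in>{1..CARD('n)}. \<forall>j\<in>{1..CARD('n)}. v i \<bullet> v j = (if i = j then 1 else 0)"
    and hess: "hessian f xs = (\<Sum>i=1..CARD('n). lam i *\<^sub>R outer (v i) (v i))"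
    and "1 \<le> p" and "p < CARD('n)"
    and sorted: "\<forall>i j. 1 \<le> i \<and> i \<le> j \<and> j \<le> CARD('n) \<longrightarrow> lam j \<le> lam i"
    and "lam (CARD('n) - p) \<ge> 0" and "lam (CARD('n) - p + 1) < 0"
    and "lam 1 > 0"
    and "0 < \<alpha>" and "\<alpha> < 4 / lam 1"
    and "max (-1 + \<alpha> * lam 1 / 2) 0 < \<beta>" and "\<beta> < 1"
    and mu_def: "\<forall>i. mu_hi i = ((1 + \<beta> - \<alpha> * lam i)
                     + sqrt ((1 + \<beta> - \<alpha> * lam i)^2 - 4 * \<beta>)) / 2"
  shows "(\<forall>i\<in>{CARD('n) - p + 1..CARD('n)}.
            mu_hi i > 1 \<and>
            blockvec (v i) ((1 / mu_hi i) *\<^sub>R v i) \<noteq> 0 \<and>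
            hb_jacobian \<alpha> \<beta> (hessian f xs) *v blockvec (v i) ((1 / mu_hi i) *\<^sub>R v i)
              = mu_hi i *\<^sub>R blockvec (v i) ((1 / mu_hi i) *\<^sub>R v i))
      \<and> inj_on (\<lambda>i. blockvec (v i) ((1 / mu_hi i) *\<^sub>R v i)) {CARD('n) - p + 1..CARD('n)}
      \<and> (\<forall>i\<in>{CARD('n) - p + 1..CARD('n)}. \<forall>j\<in>{CARD('n) - p + 1..CARD('n)}. i \<noteq> j \<longrightarrow>
            blockvec (v i) ((1 / mu_hi i) *\<^sub>R v i) \<bullet> blockvec (v j) ((1 / mu_hi j) *\<^sub>R v j) = 0)
      \<and> independent ((\<lambda>i. blockvec (v i) ((1 / mu_hi i) *\<^sub>R v i)) ` {CARD('n) - p + 1..CARD('n)})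
      \<and> span ((\<lambda>i. blockvec (v i) ((1 / mu_hi i) *\<^sub>R v i)) ` {CARD('n) - p + 1..CARD('n)})
          = unstable_subspace (hb_jacobian \<alpha> \<beta> (hessian f xs))"
  proof -
  define n where "n = CARD('n)"
  define K where "K = {1..n}"
  define I where "I = {n - p + 1..n}"
  define J where "J = {1..n - p}"
  define H where "H = hessian f xs"
  define A where "A = hb_jacobian \<alpha> \<beta> H"
  define g where "g = (\<lambda>i. blockvec (v i) ((1 / mu_hi i) *\<^sub>R v i))"
  define sk where "sk = (\<lambda>k. 1 + \<beta> - \<alpha> * lam k)"
  have np: "1 \<le> n - p" "n - p < n" using assms(7,8) by (auto simp: n_def)
  have KJI: "K = J \<union> I" "J \<inter> I = {}" "I \<subseteq> K" "J \<subseteq> K" using np by (auto simp: K_def I_def J_def)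
  have finK: "finite K" and finI: "finite I" and finJ: "finite J" by (simp_all add: K_def I_def J_def)
  have orthK: "\<forall>i\<in>K. \<forall>j\<in>K. v i \<bullet> v j = (if i = j then 1 else 0)" using orthonormal by (simp add: K_def n_def)
  have hK: "H = (\<Sum>i\<in>K. lam i *\<^sub>R outer (v i) (v i))" using hess by (simp add: H_def K_def n_def)
  have cardK: "card K = CARD('n)" by (simp add: K_def n_def)
  have bpos: "0 < \<beta>" and alam: "\<alpha> * lam 1 < 2 + 2 * \<beta>" using assms(15) by auto
  have lamI: "lam k < 0" if "k \<in> I" for k
  proof -
    have "lam k \<le> lam (n - p + 1)" using sorted that np by (auto simp: I_def n_def)
    then show ?thesis using assms(11) by (simp add: n_def)
  qed
  have lamJ: "0 \<le> lam k \<and> lam k \<le> lam 1" if "k \<in> J" for k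
  proof -
    have "lam (n - p) \<le> lam k" "lam k \<le> lam 1" using sorted that np by (auto simp: J_def n_def)
    then show ?thesis using assms(10) by (simp add: n_def)
  qed
  have skI: "sk k > 1 + \<beta>" if "k \<in> I" for k
    using lamI[OF that] assms(13) by (simp add: sk_def mult_neg_pos) (smt (verit) mult_pos_neg)
  have muI: "mu_hi k > 1" "(mu_hi k)^2 - sk k * mu_hi k + \<beta> = 0" "0 < sk k - mu_hi k" "sk k - mu_hi k < 1"
    if "k \<in> I" for k
  proof -
    have e: "mu_hi k = (sk k + sqrt ((sk k)^2 - 4 * \<beta>)) / 2" using mu_def by (simp add: sk_def)
    show "mu_hi k > 1" "(mu_hi k)^2 - sk k * mu_hi k + \<beta> = 0" "0 < sk k - mu_hi k" "sk k - mu_hi k < 1"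
      using root_facts[OF skI[OF that] bpos assms(16)] unfolding e by auto
  qed
  have skJ: "\<bar>sk k\<bar> \<le> 1 + \<beta>" if "k \<in> J" for k
  proof -
    have "\<alpha> * lam k \<le> \<alpha> * lam 1" using lamJ[OF that] assms(13) by (simp add: mult_left_mono)
    moreover have "0 \<le> \<alpha> * lam k" using lamJ[OF that] assms(13) by simp
    ultimately show ?thesis using alam by (simp add: sk_def abs_le_iff)
  qed
  note Hlem = H_col[OF finK orthK hK] H_eig[OF finK orthK hK] complete[OF finK orthK hK cardK]
  have vne: "v i \<noteq> 0" if "i \<in> K" for i using orthK that by fastforce
  have gne: "g i \<noteq> 0" if "i \<in> I" for i using vne that KJI by (simp add: g_def blockvec_eq_0)
  have eig: "A *v g i = mu_hi i *\<^sub>R g i" if "i \<in> I" for i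
  proof -
    have i: "i \<in> K" using that KJI by auto
    have m0: "mu_hi i \<noteq> 0" using muI(1)[OF that] by simp
    have c: "(1 + \<beta>) - \<alpha> * lam i - \<beta> * (1 / mu_hi i) = mu_hi i"
      using muI(2)[OF that] m0 by (simp add: sk_def field_simps power2_eq_square)
    have "(1 + \<beta>) *\<^sub>R v i - \<alpha> *\<^sub>R (H *v v i) - \<beta> *\<^sub>R ((1 / mu_hi i) *\<^sub>R v i)
        = ((1 + \<beta>) - \<alpha> * lam i - \<beta> * (1 / mu_hi i)) *\<^sub>R v i"
      using Hlem(2)[OF i] by (simp add: algebra_simps)
    then show ?thesis unfolding A_def g_def hb_mult blockvec_scale c using m0 by simp
  qed
  have orthg: "g i \<bullet> g j = 0" if "i \<in> I" "j \<in> I" "i \<noteq> j" for i j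
    using orthK that KJI by (auto simp: g_def inner_blockvec)
  have injg: "inj_on g I"
  proof
    fix i j assume "i \<in> I" "j \<in> I" "g i = g j"
    then show "i = j" using orthg gne by (metis inner_eq_zero_iff)
  qed
  have indep: "independent (g ` I)"
    by (rule pairwise_orthogonal_independent) (use orthg gne in \<open>auto simp: pairwise_def orthogonal_def\<close>)
  have sub1: "span (g ` I) \<subseteq> unstable_subspace A"
  proof
    fix z assume "z \<in> span (g ` I)"
    then obtain u where z: "z = (\<Sum>x\<in>g ` I. u x *\<^sub>R x)" using span_finite[of "g ` I"] finI by auto
    define c where "c i = u (g i)" for i
    have z2: "z = (\<Sum>i\<in>I. c i *\<^sub>R g i)" using z sum.reindex[OF injg] by (simp add: c_def comp_def)
    define F where "F = (\<lambda>i. complex_of_real (mu_hi i)) ` I"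
    define w where "w \<mu> = (\<Sum>i\<in>{i\<in>I. complex_of_real (mu_hi i) = \<mu>}. complex_of_real (c i) *s cvec (g i))" for \<mu>
    have "cvec z = (\<Sum>i\<in>I. complex_of_real (c i) *s cvec (g i))" using z2 cvec_sum_scale by simp
    also have "\<dots> = (\<Sum>\<mu>\<in>F. w \<mu>)" unfolding F_def w_def by (rule sum.image_gen[OF finI])
    finally have zF: "cvec z = (\<Sum>\<mu>\<in>F. w \<mu>)" .
    have mem: "\<forall>\<mu>\<in>F. cmod \<mu> > 1 \<and> w \<mu> \<in> gen_eigenspace (cmat A) \<mu>"
    proof
      fix \<mu> assume "\<mu> \<in> F"
      then obtain i0 where i0: "i0 \<in> I" "\<mu> = complex_of_real (mu_hi i0)" by (auto simp: F_def)
      have cm: "cmod \<mu> > 1" using muI(1)[OF i0(1)] i0(2) by simp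
      have "cmat A *v w \<mu> - \<mu> *s w \<mu> = (\<Sum>i\<in>{i\<in>I. complex_of_real (mu_hi i) = \<mu>}.
              complex_of_real (c i) *s (cmat A *v cvec (g i) - \<mu> *s cvec (g i)))"
        unfolding w_def by (rule T_sum) (use finI in simp)
      also have "\<dots> = 0"
        by (rule sum.neutral) (auto simp: cmat_cvec eig cvec_scale)
      finally have eq: "cmat A *v w \<mu> - \<mu> *s w \<mu> = 0" .
      have "w \<mu> \<in> gen_eigenspace (cmat A) \<mu>"
        unfolding gen_eigenspace_def by (intro CollectI exI[of _ 1]) (simp add: eq)
      then show "cmod \<mu> > 1 \<and> w \<mu> \<in> gen_eigenspace (cmat A) \<mu>" using cm by blast
    qed
    have "finite F" using finI by (simp add: F_def)
    then show "z \<in> unstable_subspace A" unfolding unstable_subspace_def using mem zF by blast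
  qed
  have sub2: "unstable_subspace A \<subseteq> span (g ` I)"
  proof
    fix z assume "z \<in> unstable_subspace A"
    then obtain F w where finF: "finite F"
      and Fw: "\<forall>\<mu>\<in>F. 1 < cmod \<mu> \<and> w \<mu> \<in> gen_eigenspace (cmat A) \<mu>"
      and z: "cvec z = (\<Sum>\<mu>\<in>F. w \<mu>)" unfolding unstable_subspace_def by blast
    define x where "x = (\<chi> j. z $ Inl j)"
    define y where "y = (\<chi> j. z $ Inr j)"
    have Qs: "ca (v k) (w \<mu>) = 0 \<and> cb (v k) (w \<mu>) = 0" if k: "k \<in> J" and mu: "\<mu> \<in> F" for k \<mu>
    proof -
      obtain m where m: "((\<lambda>u. cmat A *v u - \<mu> *s u) ^^ m) (w \<mu>) = 0"
        using Fw mu unfolding gen_eigenspace_def by blast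
      have nr: "\<mu>^2 - complex_of_real (1 + \<beta> - \<alpha> * lam k) * \<mu> + complex_of_real \<beta> \<noteq> 0"
        using no_big_root[OF skJ[OF k] bpos assms(16)] Fw mu by (simp add: sk_def)
      show ?thesis using stable_block[OF finK orthK hK _ nr] k KJI m by (auto simp: A_def)
    qed
    have Qu: "ca (v k) (w \<mu>) = complex_of_real (mu_hi k) * cb (v k) (w \<mu>)" if k: "k \<in> I" and mu: "\<mu> \<in> F" for k \<mu>
    proof -
      obtain m where m: "((\<lambda>u. cmat A *v u - \<mu> *s u) ^^ m) (w \<mu>) = 0"
        using Fw mu unfolding gen_eigenspace_def by blast
      have rt: "(complex_of_real (mu_hi k))^2 - complex_of_real (1 + \<beta> - \<alpha> * lam k) * complex_of_real (mu_hi k)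
          + complex_of_real \<beta> = 0"
      proof -
        have "complex_of_real ((mu_hi k)^2 - sk k * mu_hi k + \<beta>) = 0" using muI(2)[OF k] by simp
        then show ?thesis by (simp add: sk_def)
      qed
      have "cmod (complex_of_real (sk k - mu_hi k)) < 1" using muI(3,4)[OF k] by (simp only: norm_of_real)
      then have ne: "complex_of_real (1 + \<beta> - \<alpha> * lam k) - complex_of_real (mu_hi k) \<noteq> \<mu>"
        using Fw mu by (auto simp: sk_def)
      show ?thesis using unstable_block[OF finK orthK hK _ rt ne] k KJI m by (auto simp: A_def)
    qed
    have hJ: "x \<bullet> v k = 0 \<and> y \<bullet> v k = 0" if k: "k \<in> J" for k
    proof -
      have "complex_of_real (x \<bullet> v k) = (\<Sum>\<mu>\<in>F. ca (v k) (w \<mu>))"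
        using ca_cvec[of "v k" z] ca_sum[OF finF, of "v k" w] z by (simp add: x_def)
      moreover have "complex_of_real (y \<bullet> v k) = (\<Sum>\<mu>\<in>F. cb (v k) (w \<mu>))"
        using cb_cvec[of "v k" z] cb_sum[OF finF, of "v k" w] z by (simp add: y_def)
      ultimately show ?thesis using Qs[OF k] by simp
    qed
    have hI: "x \<bullet> v k = mu_hi k * (y \<bullet> v k)" if k: "k \<in> I" for k
    proof -
      have "complex_of_real (x \<bullet> v k) = (\<Sum>\<mu>\<in>F. ca (v k) (w \<mu>))"
        using ca_cvec[of "v k" z] ca_sum[OF finF, of "v k" w] z by (simp add: x_def)
      also have "\<dots> = complex_of_real (mu_hi k) * (\<Sum>\<mu>\<in>F. cb (v k) (w \<mu>))"
        using Qu[OF k] by (simp add: sum_distrib_left)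
      also have "(\<Sum>\<mu>\<in>F. cb (v k) (w \<mu>)) = complex_of_real (y \<bullet> v k)"
        using cb_cvec[of "v k" z] cb_sum[OF finF, of "v k" w] z by (simp add: y_def)
      finally have "complex_of_real (x \<bullet> v k) = complex_of_real (mu_hi k * (y \<bullet> v k))" by simp
      then show ?thesis using of_real_eq_iff by blast
    qed
    have xe: "x = (\<Sum>k\<in>I. (x \<bullet> v k) *\<^sub>R v k)"
    proof -
      have "x = (\<Sum>k\<in>K. (x \<bullet> v k) *\<^sub>R v k)" by (rule Hlem(3))
      also have "\<dots> = (\<Sum>k\<in>J. (x \<bullet> v k) *\<^sub>R v k) + (\<Sum>k\<in>I. (x \<bullet> v k) *\<^sub>R v k)"
        unfolding KJI(1) by (rule sum.union_disjoint) (use finI finJ KJI in auto)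
      also have "\<dots> = 0 + (\<Sum>k\<in>I. (x \<bullet> v k) *\<^sub>R v k)"
        using hJ by simp
      also have "\<dots> = (\<Sum>k\<in>I. (x \<bullet> v k) *\<^sub>R v k)" by simp
      finally show ?thesis .
    qed
    have ye: "y = (\<Sum>k\<in>I. (y \<bullet> v k) *\<^sub>R v k)"
    proof -
      have "y = (\<Sum>k\<in>K. (y \<bullet> v k) *\<^sub>R v k)" by (rule Hlem(3))
      also have "\<dots> = (\<Sum>k\<in>J. (y \<bullet> v k) *\<^sub>R v k) + (\<Sum>k\<in>I. (y \<bullet> v k) *\<^sub>R v k)"
        unfolding KJI(1) by (rule sum.union_disjoint) (use finI finJ KJI in auto)
      also have "\<dots> = 0 + (\<Sum>k\<in>I. (y \<bullet> v k) *\<^sub>R v k)"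
        using hJ by simp
      also have "\<dots> = (\<Sum>k\<in>I. (y \<bullet> v k) *\<^sub>R v k)" by simp
      finally show ?thesis .
    qed
    have "(\<Sum>k\<in>I. (mu_hi k * (y \<bullet> v k)) *\<^sub>R g k)
        = blockvec (\<Sum>k\<in>I. (mu_hi k * (y \<bullet> v k)) *\<^sub>R v k) (\<Sum>k\<in>I. (mu_hi k * (y \<bullet> v k)) *\<^sub>R ((1 / mu_hi k) *\<^sub>R v k))"
      unfolding g_def blockvec_scale by (rule blockvec_sum[OF finI])
    also have "\<dots> = blockvec x y"
    proof -
      have "(\<Sum>k\<in>I. (mu_hi k * (y \<bullet> v k)) *\<^sub>R v k) = x"
      proof -
        have "(\<Sum>k\<in>I. (mu_hi k * (y \<bullet> v k)) *\<^sub>R v k) = (\<Sum>k\<in>I. (x \<bullet> v k) *\<^sub>R v k)"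
          by (intro sum.cong refl) (simp add: hI)
        then show ?thesis using xe[symmetric] by (rule trans)
      qed
      moreover have "(\<Sum>k\<in>I. (mu_hi k * (y \<bullet> v k)) *\<^sub>R ((1 / mu_hi k) *\<^sub>R v k)) = y"
      proof -
        have "(\<Sum>k\<in>I. (mu_hi k * (y \<bullet> v k)) *\<^sub>R ((1 / mu_hi k) *\<^sub>R v k)) = (\<Sum>k\<in>I. (y \<bullet> v k) *\<^sub>R v k)"
          using muI(1) by (intro sum.cong refl) (use muI(1) in \<open>fastforce\<close>)
        then show ?thesis using ye[symmetric] by (rule trans)
      qed
      ultimately show ?thesis by simp
    qed
    also have "blockvec x y = z" unfolding x_def y_def by (rule blockvec_parts[symmetric])
    finally have "z = (\<Sum>k\<in>I. (mu_hi k * (y \<bullet> v k)) *\<^sub>R g k)" by (rule sym)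
    then show "z \<in> span (g ` I)"
      by (simp add: span_sum span_scale span_base)
  qed
  show ?thesis
    using muI(1) gne eig orthg injg indep sub1 sub2 unfolding g_def H_def A_def I_def n_def by auto
qed

end
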